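(* Let $n\ge 3$ be an integer and let $C_n$ denote the cycle on $n$ vertices. For any $x\in\mathbb{N}$ and any integer $y$ with $0\le y\le x$, \[ P(C_n,x,y) = \left( \frac{x - 1 - \sqrt{(x+1)^2-4y} }{2} \right)^{n} + \left( \frac{x - 1 + \sqrt{(x+1)^2-4y}}{2} \right)^{n} + (-1)^{n} (y - 1). \]
   Context: For a finite simple graph $G=(V,E)$, $x\in\mathbb{N}$ and $y\in\{0,\dots,x\}$, the bivariate chromatic polynomial $P(G,x,y)$ is the number of maps $f:V\to\{1,\dots,x\}$ such that for every edge $\{v,w\}\in E$, either $f(v)\neq f(w)$ or $f(v)=f(w)>y$. (Equivalently: colorings in which adjacent vertices receive different colors or share a color from $\{y+1,\dots,x\}$.) *)

theory Defs
  imports "HOL-Analysis.Analysis" "HOL-Library.FuncSet"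
begin

definition simple_graph :: "'a set \<Rightarrow> 'a set set \<Rightarrow> bool" where
  "simple_graph V E \<longleftrightarrow> finite V \<and> (\<forall>e\<in>E. e \<subseteq> V \<and> card e = 2)"

definition biv_chrom :: "'a set \<Rightarrow> 'a set set \<Rightarrow> nat \<Rightarrow> nat \<Rightarrow> nat" where
  "biv_chrom V E x y = card {f \<in> V \<rightarrow>\<^sub>E {1..x}.
     \<forall>v w. {v, w} \<in> E \<longrightarrow> f v \<noteq> f w \<or> y < f v}"

definition cycle_vertices :: "nat \<Rightarrow> nat set" where
  "cycle_vertices n = {0..<n}"

definition cycle_edges :: "nat \<Rightarrow> nat set set" where
  "cycle_edges n = {{i, (i + 1) mod n} | i. i < n}"

end

theory Submission
  imports Defs
begin

definition al :: "bool \<Rightarrow> nat \<Rightarrow> real" where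
  "al e k = (if e then - ((-1)^k) else 0)"

fun bg :: "real \<Rightarrow> real \<Rightarrow> bool \<Rightarrow> nat \<Rightarrow> real \<times> real" where
  "bg x y e 0 = (1,1)"
| "bg x y e (Suc k) = (case bg x y e k of (b,g) \<Rightarrow>
     (al e k + y*b + (x-y)*g - b, al e k + y*b + (x-y)*g))"

definition Z :: "real \<Rightarrow> real \<Rightarrow> nat \<Rightarrow> real" where
  "Z x y k = y * fst (bg x y True k) + (x-y) * snd (bg x y False k) + (-1)^(k+1)"

lemma Z_rec: "Z x y (Suc (Suc k)) = (x-1) * Z x y (Suc k) + (x-y) * Z x y k"
proof -
  obtain b g where 1: "bg x y True k = (b,g)" by fastforce
  obtain b' g' where 2: "bg x y False k = (b',g')" by fastforce
  show ?thesis unfolding Z_def using 1 2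
    by (simp add: al_def algebra_simps)
qed

definition SS :: "real \<Rightarrow> real \<Rightarrow> nat \<Rightarrow> real" where
  "SS x s k = ((x - 1 - s)/2)^k + ((x - 1 + s)/2)^k"

lemma S_rec:
  fixes x y :: real
  assumes "s^2 = (x+1)^2 - 4*y"
  defines "S \<equiv> SS x s"
  shows "S (Suc (Suc k)) = (x-1) * S (Suc k) + (x-y) * S k"
proof -
  have r: "l^2 = (x-1)*l + (x-y)" if "l = (x - 1 - s)/2 \<or> l = (x - 1 + s)/2" for l
  proof -
    have "s = -(2*l-x+1) \<or> s = 2*l-x+1" using that by (auto simp: field_simps)
    then have "s^2 = (2*l - x + 1)^2" by (metis power2_minus)
    then have "(2*l - x + 1)^2 = (x+1)^2 - 4*y" using assms(1) by simp
    then show ?thesis by (simp add: power2_eq_square algebra_simps)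
  qed
  have P: "l^(Suc (Suc k)) = (x-1)*l^(Suc k) + (x-y)*l^k" if "l^2 = (x-1)*l + (x-y)" for l
  proof -
    have "l^(Suc (Suc k)) = l^k * l^2" by (simp add: power2_eq_square)
    also have "\<dots> = l^k * ((x-1)*l + (x-y))" using that by simp
    also have "\<dots> = (x-1)*l^(Suc k) + (x-y)*l^k" by (simp add: algebra_simps)
    finally show ?thesis .
  qed
  have A: "((x - 1 - s)/2)^(Suc (Suc k)) = (x-1)*((x - 1 - s)/2)^(Suc k) + (x-y)*((x - 1 - s)/2)^k"
    by (rule P, rule r) simp
  have B: "((x - 1 + s)/2)^(Suc (Suc k)) = (x-1)*((x - 1 + s)/2)^(Suc k) + (x-y)*((x - 1 + s)/2)^k"
    by (rule P, rule r) simp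
  show ?thesis unfolding S_def SS_def by (simp only: A B) algebra
qed

lemma Z_eq:
  fixes x y :: real
  assumes "s^2 = (x+1)^2 - 4*y"
  shows "Z x y k = SS x s (Suc k)"
proof (induction k rule: nat_less_induct)
  case (1 k)
  define S where "S \<equiv> SS x s"
  show ?case
  proof (cases k)
    case 0 then show ?thesis by (simp add: Z_def SS_def al_def field_simps)
  next
    case (Suc j) note j = this
    show ?thesis
    proof (cases j)
      case 0
      have "S 2 = ((x-1)^2 + s^2)/2" unfolding S_def SS_def by (simp add: power2_eq_square field_simps)
      then have "S 2 = x^2 - 2*y + 1" using assms by (simp add: power2_eq_square field_simps)
      then show ?thesis using j 0 unfolding S_def by (simp add: Z_def al_def algebra_simps power2_eq_square numeral_2_eq_2)
    next
      case (Suc i)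
      have "Z x y k = (x-1) * Z x y (Suc i) + (x-y) * Z x y i" using j Suc Z_rec by simp
      also have "\<dots> = (x-1) * S (Suc (Suc i)) + (x-y) * S (Suc i)"
        using 1 j Suc unfolding S_def by simp
      also have "\<dots> = S (Suc k)" using S_rec[OF assms, of "Suc i"] j Suc unfolding S_def by simp
      finally show ?thesis unfolding S_def .
    qed
  qed
qed

definition ok :: "nat \<Rightarrow> nat \<Rightarrow> nat \<Rightarrow> bool" where
  "ok y u v = (u \<noteq> v \<or> y < u)"

definition WS :: "nat \<Rightarrow> nat \<Rightarrow> nat \<Rightarrow> nat \<Rightarrow> nat \<Rightarrow> nat list set" where
  "WS x y m a b = {xs. length xs = m \<and> set xs \<subseteq> {1..x} \<and> successively (ok y) (a # xs @ [b])}"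

definition W :: "nat \<Rightarrow> nat \<Rightarrow> nat \<Rightarrow> nat \<Rightarrow> nat \<Rightarrow> nat" where
  "W x y m a b = card (WS x y m a b)"

lemma WS_finite: "finite (WS x y m a b)"
proof -
  have "WS x y m a b \<subseteq> {xs. set xs \<subseteq> {1..x} \<and> length xs = m}" unfolding WS_def by auto
  moreover have "finite {xs. set xs \<subseteq> {1..x} \<and> length xs = m}"
    by (rule finite_lists_length_eq) simp
  ultimately show ?thesis by (rule finite_subset)
qed

lemma W_0: "W x y 0 a b = (if ok y a b then 1 else 0)"
proof -
  have "WS x y 0 a b = (if ok y a b then {[]} else {})" unfolding WS_def by auto
  then show ?thesis unfolding W_def by simp
qed

lemma W_Suc: "W x y (Suc m) a b = (\<Sum>c\<in>{c\<in>{1..x}. ok y a c}. W x y m c b)"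
proof -
  have "WS x y (Suc m) a b = (\<Union>c\<in>{c\<in>{1..x}. ok y a c}. (Cons c) ` WS x y m c b)"
  proof (rule set_eqI, rule iffI)
    fix xs assume "xs \<in> WS x y (Suc m) a b"
    then obtain c ys where "xs = c # ys" "length ys = m" "c \<in> {1..x}" "set ys \<subseteq> {1..x}"
      "ok y a c" "successively (ok y) (c # ys @ [b])"
      unfolding WS_def by (cases xs) auto
    then show "xs \<in> (\<Union>c\<in>{c\<in>{1..x}. ok y a c}. (Cons c) ` WS x y m c b)"
      unfolding WS_def by auto
  next
    fix xs assume "xs \<in> (\<Union>c\<in>{c\<in>{1..x}. ok y a c}. (Cons c) ` WS x y m c b)"
    then show "xs \<in> WS x y (Suc m) a b" unfolding WS_def by auto
  qed
  then have "W x y (Suc m) a b = card (\<Union>c\<in>{c\<in>{1..x}. ok y a c}. (Cons c) ` WS x y m c b)"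
    unfolding W_def by simp
  also have "\<dots> = (\<Sum>c\<in>{c\<in>{1..x}. ok y a c}. card ((Cons c) ` WS x y m c b))"
    by (rule card_UN_disjoint) (auto simp: WS_finite)
  also have "\<dots> = (\<Sum>c\<in>{c\<in>{1..x}. ok y a c}. W x y m c b)"
    unfolding W_def by (intro sum.cong refl card_image) auto
  finally show ?thesis .
qed

lemma W_Suc':
  assumes "a \<in> {1..x}"
  shows "real (W x y (Suc m) a b) = (\<Sum>c\<in>{1..x}. real (W x y m c b)) - (if a \<le> y then real (W x y m a b) else 0)"
proof -
  have e: "{c\<in>{1..x}. ok y a c} = {1..x} - (if a \<le> y then {a} else {})"
    unfolding ok_def by auto
  show ?thesis
  proof (cases "a \<le> y")
    case True
    then show ?thesis unfolding W_Suc e using assms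
      by (simp add: of_nat_sum sum_diff1)
  next
    case False
    then show ?thesis unfolding W_Suc e by (simp add: of_nat_sum)
  qed
qed

lemma sum_split:
  fixes p q :: real
  assumes "y \<le> x"
  shows "(\<Sum>c\<in>{1..x}. if c \<le> y then p else q) = real y * p + (real x - real y) * q"
proof -
  have 1: "{1..x} \<inter> {c. c \<le> y} = {1..y}" using assms by auto
  have 2: "{1..x} \<inter> - {c. c \<le> y} = {y<..x}" using assms by auto
  show ?thesis unfolding sum.If_cases[OF finite_atLeastAtMost] 1 2 using assms
    by (simp add: of_nat_diff)
qed

lemma W_closed:
  assumes "b \<in> {1..x}" "y \<le> x"
  shows "\<forall>a\<in>{1..x}. real (W x y m a b) = (if a = b then al (b \<le> y) m else 0)
     + (if a \<le> y then fst (bg (real x) (real y) (b \<le> y) m) else snd (bg (real x) (real y) (b \<le> y) m))"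
proof (induction m)
  case 0
  then show ?case by (auto simp: W_0 ok_def al_def)
next
  case (Suc m)
  obtain p q where pq: "bg (real x) (real y) (b \<le> y) m = (p, q)" by fastforce
  define A where "A = al (b \<le> y) m"
  have s: "(\<Sum>c\<in>{1..x}. real (W x y m c b)) = A + real y * p + (real x - real y) * q"
  proof -
    have "(\<Sum>c\<in>{1..x}. real (W x y m c b)) = (\<Sum>c\<in>{1..x}. (if c = b then A else 0) + (if c \<le> y then p else q))"
      using Suc.IH pq unfolding A_def by (intro sum.cong) auto
    also have "\<dots> = A + real y * p + (real x - real y) * q"
      unfolding sum.distrib sum_split[OF assms(2)] using assms(1) by simp
    finally show ?thesis .
  qed
  show ?case
  proof
    fix a assume a: "a \<in> {1..x}"
    have IHa: "real (W x y m a b) = (if a = b then A else 0) + (if a \<le> y then p else q)"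
      using Suc.IH pq a unfolding A_def by auto
    have A0: "\<not> b \<le> y \<Longrightarrow> A = 0" unfolding A_def al_def by simp
    have As: "al (b \<le> y) (Suc m) = - A" unfolding A_def al_def by simp
    show "real (W x y (Suc m) a b) = (if a = b then al (b \<le> y) (Suc m) else 0)
     + (if a \<le> y then fst (bg (real x) (real y) (b \<le> y) (Suc m)) else snd (bg (real x) (real y) (b \<le> y) (Suc m)))"
      unfolding W_Suc'[OF a] s IHa As using pq A0
      by (auto simp: algebra_simps A_def al_def)
  qed
qed

lemma ok_sym: "ok y u v = ok y v u" unfolding ok_def by auto

lemma succ_cyc:
  assumes "length xs = n" "n > 0"
  shows "successively P (xs @ [xs!0]) \<longleftrightarrow> (\<forall>i<n. P (xs!i) (xs!(Suc i mod n)))"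
proof -
  have "(xs @ [xs!0]) ! i = xs ! i" if "i < n" for i using that assms by (simp add: nth_append)
  moreover have "(xs @ [xs!0]) ! Suc i = xs ! (Suc i mod n)" if "i < n" for i
  proof (cases "Suc i < n")
    case False
    then have "Suc i = n" using that by simp
    then show ?thesis using assms by (simp add: nth_append)
  qed (use assms in \<open>simp add: nth_append\<close>)
  ultimately show ?thesis unfolding successively_conv_nth using assms by auto
qed

lemma step1:
  assumes "n \<ge> 3"
  shows "biv_chrom (cycle_vertices n) (cycle_edges n) x y =
    card {f \<in> {0..<n} \<rightarrow>\<^sub>E {1..x}. \<forall>i<n. ok y (f i) (f (Suc i mod n))}"
proof -
  have "(\<forall>v w. {v, w} \<in> cycle_edges n \<longrightarrow> f v \<noteq> f w \<or> y < f v) \<longleftrightarrow>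
        (\<forall>i<n. ok y (f i) (f (Suc i mod n)))" for f :: "nat \<Rightarrow> nat"
  proof
    assume H: "\<forall>v w. {v, w} \<in> cycle_edges n \<longrightarrow> f v \<noteq> f w \<or> y < f v"
    show "\<forall>i<n. ok y (f i) (f (Suc i mod n))"
    proof (intro allI impI)
      fix i assume "i < n"
      then have "{i, Suc i mod n} \<in> cycle_edges n" unfolding cycle_edges_def by auto
      then show "ok y (f i) (f (Suc i mod n))" using H unfolding ok_def by blast
    qed
  next
    assume H: "\<forall>i<n. ok y (f i) (f (Suc i mod n))"
    show "\<forall>v w. {v, w} \<in> cycle_edges n \<longrightarrow> f v \<noteq> f w \<or> y < f v"
    proof (intro allI impI)
      fix v w assume "{v, w} \<in> cycle_edges n"
      then obtain i where i: "i < n" "{v, w} = {i, Suc i mod n}" unfolding cycle_edges_def by auto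
      then have "(v = i \<and> w = Suc i mod n) \<or> (v = Suc i mod n \<and> w = i)"
        by (auto simp: doubleton_eq_iff)
      then show "f v \<noteq> f w \<or> y < f v" using H i(1) ok_sym unfolding ok_def by metis
    qed
  qed
  then show ?thesis unfolding biv_chrom_def cycle_vertices_def by simp
qed

lemma step2:
  assumes "n > 0"
  shows "card {f \<in> {0..<n} \<rightarrow>\<^sub>E {1..x}. \<forall>i<n. ok y (f i) (f (Suc i mod n))} =
    card {xs. length xs = n \<and> set xs \<subseteq> {1..x} \<and> successively (ok y) (xs @ [xs!0])}"
proof -
  let ?A = "{f \<in> {0..<n} \<rightarrow>\<^sub>E {1..x}. \<forall>i<n. ok y (f i) (f (Suc i mod n))}"
  let ?g = "\<lambda>f. map f [0..<n]"
  have inj: "inj_on ?g ?A"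
  proof (rule inj_onI)
    fix f g assume "f \<in> ?A" "g \<in> ?A" "map f [0..<n] = map g [0..<n]"
    then show "f = g"
      by (intro PiE_ext[of f "{0..<n}" "\<lambda>_. {1..x}" g]) (simp_all add: map_eq_conv)
  qed
  have img: "?g ` ?A = {xs. length xs = n \<and> set xs \<subseteq> {1..x} \<and> successively (ok y) (xs @ [xs!0])}"
  proof (rule set_eqI, rule iffI)
    fix xs assume "xs \<in> ?g ` ?A"
    then obtain f where f: "f \<in> ?A" "xs = map f [0..<n]" by blast
    have len: "length xs = n" using f by simp
    have "\<forall>i<n. ok y (xs!i) (xs!(Suc i mod n))"
    proof (intro allI impI)
      fix i assume i: "i < n"
      have m: "Suc i mod n < n" using assms by simp
      have "ok y (f i) (f (Suc i mod n))" using f(1) i by simp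
      then show "ok y (xs!i) (xs!(Suc i mod n))" using f(2) i m by simp
    qed
    then have "successively (ok y) (xs @ [xs!0])" using succ_cyc[OF len assms] by simp
    moreover have "set xs \<subseteq> {1..x}"
    proof -
      have "\<forall>i\<in>{0..<n}. f i \<in> {1..x}" using f(1) by (simp add: PiE_iff)
      then show ?thesis unfolding f(2) by auto
    qed
    ultimately show "xs \<in> {xs. length xs = n \<and> set xs \<subseteq> {1..x} \<and> successively (ok y) (xs @ [xs!0])}"
      using len by blast
  next
    fix xs assume xs: "xs \<in> {xs. length xs = n \<and> set xs \<subseteq> {1..x} \<and> successively (ok y) (xs @ [xs!0])}"
    define f where "f = (\<lambda>i. if i < n then xs ! i else undefined)"
    have "xs = map f [0..<n]" using xs unfolding f_def by (intro nth_equalityI) simp_all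
    moreover have "f \<in> ?A"
    proof -
      have len: "length xs = n" using xs by simp
      have e: "f \<in> extensional {0..<n}" unfolding f_def extensional_def by simp
      have r: "\<forall>i\<in>{0..<n}. f i \<in> {1..x}" using xs unfolding f_def by (auto simp: nth_mem subset_iff)
      have "\<forall>i<n. ok y (xs!i) (xs!(Suc i mod n))" using succ_cyc[OF len assms] xs by simp
      then have "\<forall>i<n. ok y (f i) (f (Suc i mod n))"
      proof (intro allI impI)
        fix i assume "\<forall>i<n. ok y (xs!i) (xs!(Suc i mod n))" "i < n"
        moreover have "Suc i mod n < n" using assms by simp
        ultimately show "ok y (f i) (f (Suc i mod n))" unfolding f_def by simp
      qed
      then show ?thesis using e r by (simp add: PiE_iff)
    qed
    ultimately show "xs \<in> ?g ` ?A" by (rule image_eqI)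
  qed
  show ?thesis using card_image[OF inj] img by simp
qed

lemma step3:
  assumes "n > 0"
  shows "card {xs. length xs = n \<and> set xs \<subseteq> {1..x} \<and> successively (ok y) (xs @ [xs!0])}
    = (\<Sum>a\<in>{1..x}. W x y (n-1) a a)"
proof -
  have "{xs. length xs = n \<and> set xs \<subseteq> {1..x} \<and> successively (ok y) (xs @ [xs!0])}
     = (\<Union>a\<in>{1..x}. (Cons a) ` WS x y (n-1) a a)"
  proof (rule set_eqI, rule iffI)
    fix xs assume "xs \<in> {xs. length xs = n \<and> set xs \<subseteq> {1..x} \<and> successively (ok y) (xs @ [xs!0])}"
    then have H: "length xs = n" "set xs \<subseteq> {1..x}" "successively (ok y) (xs @ [xs!0])" by simp_all
    have "xs \<noteq> []" using H(1) assms by (metis length_0_conv less_not_refl)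
    then obtain a zs where xs: "xs = a # zs" by (meson neq_Nil_conv)
    have "zs \<in> WS x y (n-1) a a" using H unfolding xs WS_def by simp
    moreover have "a \<in> {1..x}" using H(2) unfolding xs by simp
    ultimately show "xs \<in> (\<Union>a\<in>{1..x}. (Cons a) ` WS x y (n-1) a a)" unfolding xs by blast
  next
    fix xs assume "xs \<in> (\<Union>a\<in>{1..x}. (Cons a) ` WS x y (n-1) a a)"
    then obtain a zs where a: "a \<in> {1..x}" "zs \<in> WS x y (n-1) a a" "xs = a # zs" by blast
    then have "length zs = n - 1" "set zs \<subseteq> {1..x}" "successively (ok y) (a # zs @ [a])"
      unfolding WS_def by simp_all
    then show "xs \<in> {xs. length xs = n \<and> set xs \<subseteq> {1..x} \<and> successively (ok y) (xs @ [xs!0])}"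
      using assms a by simp
  qed
  then have "card {xs. length xs = n \<and> set xs \<subseteq> {1..x} \<and> successively (ok y) (xs @ [xs!0])}
     = card (\<Union>a\<in>{1..x}. (Cons a) ` WS x y (n-1) a a)" by (rule arg_cong)
  also have "\<dots> = (\<Sum>a\<in>{1..x}. card ((Cons a) ` WS x y (n-1) a a))"
    by (rule card_UN_disjoint) (auto simp: WS_finite)
  also have "\<dots> = (\<Sum>a\<in>{1..x}. W x y (n-1) a a)"
    unfolding W_def by (intro sum.cong refl card_image) auto
  finally show ?thesis .
qed

theorem theorem2:
  fixes n x y :: nat
  assumes "n \<ge> 3" and "y \<le> x"
  shows "real (biv_chrom (cycle_vertices n) (cycle_edges n) x y) =
    ((real x - 1 - sqrt ((real x + 1)^2 - 4 * real y)) / 2) ^ n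
  + ((real x - 1 + sqrt ((real x + 1)^2 - 4 * real y)) / 2) ^ n
  + (-1) ^ n * (real y - 1)"
proof -
  define k where "k = n - 1"
  have n: "n = Suc k" using assms(1) unfolding k_def by simp
  define s where "s = sqrt ((real x + 1)^2 - 4 * real y)"
  have "(real x + 1)^2 - 4 * real y \<ge> (real x - 1)^2"
    using assms(2) by (simp add: power2_eq_square algebra_simps)
  then have nn: "(real x + 1)^2 - 4 * real y \<ge> 0" by (smt (verit) zero_le_power2)
  have s2: "s^2 = (real x + 1)^2 - 4 * real y" unfolding s_def using nn by simp
  have "real (biv_chrom (cycle_vertices n) (cycle_edges n) x y) = (\<Sum>a\<in>{1..x}. real (W x y k a a))"
    using assms step1 step2 step3 unfolding k_def by simp
  also have "\<dots> = (\<Sum>a\<in>{1..x}. if a \<le> y then al True k + fst (bg (real x) (real y) True k)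
                               else snd (bg (real x) (real y) False k))"
    using W_closed[OF _ assms(2)] by (intro sum.cong refl) (auto simp: al_def)
  also have "\<dots> = real y * (al True k + fst (bg (real x) (real y) True k))
       + (real x - real y) * snd (bg (real x) (real y) False k)"
    by (rule sum_split[OF assms(2)])
  also have "\<dots> = Z (real x) (real y) k - (-1)^(Suc k) + real y * (-1)^(Suc k)"
    unfolding Z_def al_def by (simp add: algebra_simps)
  also have "\<dots> = SS (real x) s n + (-1)^n * (real y - 1)"
    unfolding Z_eq[OF s2] n by (simp add: algebra_simps)
  finally show ?thesis unfolding SS_def s_def .
qed

end
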